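(* Let $\Gamma_1$ and $\Gamma_2$ be isomorphic finite connected graphs with vertices $p_1,\dots,p_n$ and $q_1,\dots,q_n$ respectively, $p_i$ corresponding to $q_i$. Let $\Gamma_0$ be the graph obtained from the disjoint union of $\Gamma_1$ and $\Gamma_2$ by additionally joining $p_i$ with $q_j$ by an edge whenever $p_j\sim p_i$. If $\lambda_1,\dots,\lambda_n$ are the eigenvalues (with multiplicity) of the normalized Laplacian of $\Gamma_1$ (equivalently of $\Gamma_2$), then the eigenvalues of the normalized Laplacian of $\Gamma_0$ are $\lambda_1,\dots,\lambda_n$ together with the eigenvalue $1$ with multiplicity $n$.
   Context: For a finite simple graph without isolated vertices, write $i\sim j$ for adjacency and $n_i$ for the degree of $i$. The normalized Laplacian acts on real functions $v$ on the vertices by $\Delta v(i)=v(i)-\frac{1}{n_i}\sum_{j\sim i}v(j)$; $\lambda$ is an eigenvalue with eigenfunction $u$ if $u\not\equiv 0$ and $\frac{1}{n_i}\sum_{j\sim i}u(j)=(1-\lambda)u(i)$ for all $i$. A graph with $N$ vertices has $N$ eigenvalues counted with multiplicity. *)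

theory Defs
  imports "HOL-Analysis.Analysis"
begin

definition simple_graph :: "('v \<Rightarrow> 'v \<Rightarrow> bool) \<Rightarrow> bool" where
  "simple_graph E \<longleftrightarrow> (\<forall>i j. E i j \<longleftrightarrow> E j i) \<and> (\<forall>i. \<not> E i i)"

definition no_isolated :: "('v \<Rightarrow> 'v \<Rightarrow> bool) \<Rightarrow> bool" where
  "no_isolated E \<longleftrightarrow> (\<forall>i. \<exists>j. E i j)"

definition connected_graph :: "('v \<Rightarrow> 'v \<Rightarrow> bool) \<Rightarrow> bool" where
  "connected_graph E \<longleftrightarrow> (\<forall>i j. E\<^sup>*\<^sup>* i j)"

definition degree :: "('v::finite \<Rightarrow> 'v \<Rightarrow> bool) \<Rightarrow> 'v \<Rightarrow> nat" where
  "degree E i = card {j. E i j}"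

text \<open>Eigenfunctions of the normalized Laplacian for eigenvalue lam (together with 0):
  (1/n_i) * sum_{j ~ i} u(j) = (1 - lam) u(i) for all i.\<close>
definition nl_eigenspace :: "('v::finite \<Rightarrow> 'v \<Rightarrow> bool) \<Rightarrow> real \<Rightarrow> (real^'v) set" where
  "nl_eigenspace E lam =
     {u. \<forall>i. (1 / real (degree E i)) * (\<Sum>j\<in>{j. E i j}. u $ j) = (1 - lam) * u $ i}"

text \<open>Multiplicity of lam as an eigenvalue of the normalized Laplacian
  (dimension of the eigenspace; 0 if lam is not an eigenvalue).\<close>
definition nl_mult :: "('v::finite \<Rightarrow> 'v \<Rightarrow> bool) \<Rightarrow> real \<Rightarrow> nat" where
  "nl_mult E lam = dim (nl_eigenspace E lam)"

text \<open>The graph Gamma_0 on the vertex set 'v + 'v: Inl i is p_i, Inr i is q_i.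
  Two copies of E, plus p_i -- q_j whenever p_j ~ p_i.\<close>
fun double_graph :: "('v \<Rightarrow> 'v \<Rightarrow> bool) \<Rightarrow> 'v + 'v \<Rightarrow> 'v + 'v \<Rightarrow> bool" where
  "double_graph E (Inl i) (Inl j) = E i j"
| "double_graph E (Inr i) (Inr j) = E i j"
| "double_graph E (Inl i) (Inr j) = E j i"
| "double_graph E (Inr j) (Inl i) = E j i"

end

theory Submission
  imports Defs
begin

lemma all_sum_split: "(\<forall>x::'a+'b. P x) \<longleftrightarrow> (\<forall>i. P (Inl i)) \<and> (\<forall>i. P (Inr i))"
proof (intro iffI allI conjI)
  fix x assume "(\<forall>i. P (Inl i)) \<and> (\<forall>i. P (Inr i))"
  then show "P x" by (cases x) auto
qed auto

lemma nbr_Inl: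
  assumes "simple_graph E"
  shows "{j. double_graph E (Inl i) j} = Inl ` {j. E i j} \<union> Inr ` {j. E i j}"
proof -
  have s: "\<And>a b. E a b = E b a" using assms unfolding simple_graph_def by blast
  show ?thesis
  proof (rule set_eqI)
    fix x show "x \<in> {j. double_graph E (Inl i) j} \<longleftrightarrow> x \<in> Inl ` {j. E i j} \<union> Inr ` {j. E i j}"
      by (cases x) (auto simp: s)
  qed
qed

lemma nbr_Inr:
  shows "{j. double_graph E (Inr i) j} = Inl ` {j. E i j} \<union> Inr ` {j. E i j}"
proof (rule set_eqI)
  fix x show "x \<in> {j. double_graph E (Inr i) j} \<longleftrightarrow> x \<in> Inl ` {j. E i j} \<union> Inr ` {j. E i j}"
    by (cases x) auto
qed

lemma sum_nbr:
  fixes u :: "real^('v::finite + 'v)"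
  shows "(\<Sum>j\<in>Inl ` {j. E i j} \<union> Inr ` {j. E i j}. u $ j)
        = (\<Sum>j\<in>{j. E i j}. u $ Inl j) + (\<Sum>j\<in>{j. E i j}. u $ Inr j)"
  by (subst sum.union_disjoint) (auto simp: sum.reindex)

lemma card_nbr:
  fixes E :: "'v::finite \<Rightarrow> 'v \<Rightarrow> bool"
  shows "card (Inl ` {j. E i j} \<union> Inr ` {j. E i j}) = 2 * card {j. E i j}"
  by (subst card_Un_disjoint) (auto simp: card_image)

lemma mem_double:
  fixes E :: "'v::finite \<Rightarrow> 'v \<Rightarrow> bool"
  assumes "simple_graph E"
  shows "u \<in> nl_eigenspace (double_graph E) lam \<longleftrightarrow>
    (\<forall>i. (1 / (2 * real (degree E i))) * ((\<Sum>j\<in>{j. E i j}. u $ Inl j) + (\<Sum>j\<in>{j. E i j}. u $ Inr j)) = (1 - lam) * u $ Inl i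
       \<and> (1 / (2 * real (degree E i))) * ((\<Sum>j\<in>{j. E i j}. u $ Inl j) + (\<Sum>j\<in>{j. E i j}. u $ Inr j)) = (1 - lam) * u $ Inr i)"
  (is "_ \<longleftrightarrow> ?R")
proof -
  have "u \<in> nl_eigenspace (double_graph E) lam \<longleftrightarrow>
    (\<forall>x. (1 / real (degree (double_graph E) x)) * (\<Sum>j\<in>{j. double_graph E x j}. u $ j) = (1 - lam) * u $ x)"
    unfolding nl_eigenspace_def by simp
  also have "\<dots> \<longleftrightarrow> (\<forall>i. (1 / real (degree (double_graph E) (Inl i))) * (\<Sum>j\<in>{j. double_graph E (Inl i) j}. u $ j) = (1 - lam) * u $ Inl i
     \<and> (1 / real (degree (double_graph E) (Inr i))) * (\<Sum>j\<in>{j. double_graph E (Inr i) j}. u $ j) = (1 - lam) * u $ Inr i)"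
    unfolding all_sum_split by blast
  also have "\<dots> \<longleftrightarrow> ?R"
    unfolding degree_def nbr_Inl[OF assms] nbr_Inr sum_nbr card_nbr by simp
  finally show ?thesis .
qed

lemma subspace_eig:
  fixes E :: "'v::finite \<Rightarrow> 'v \<Rightarrow> bool"
  shows "subspace (nl_eigenspace E lam)"
  unfolding subspace_def nl_eigenspace_def
proof (intro conjI ballI allI; clarsimp)
  fix x y :: "real^'v" and i
  assume x: "\<forall>i. (\<Sum>j\<in>{j. E i j}. x $ j) / real (degree E i) = (1 - lam) * x $ i"
     and y: "\<forall>i. (\<Sum>j\<in>{j. E i j}. y $ j) / real (degree E i) = (1 - lam) * y $ i"
  have "(\<Sum>j\<in>{j. E i j}. x $ j + y $ j) / real (degree E i) = (\<Sum>j\<in>{j. E i j}. x $ j) / real (degree E i) + (\<Sum>j\<in>{j. E i j}. y $ j) / real (degree E i)"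
    by (simp add: sum.distrib add_divide_distrib)
  then show "(\<Sum>j\<in>{j. E i j}. x $ j + y $ j) / real (degree E i) = (1 - lam) * (x $ i + y $ i)"
    using x y by (simp add: algebra_simps)
next
  fix c :: real and x :: "real^'v" and i
  assume x: "\<forall>i. (\<Sum>j\<in>{j. E i j}. x $ j) / real (degree E i) = (1 - lam) * x $ i"
  have "(\<Sum>j\<in>{j. E i j}. c * x $ j) / real (degree E i) = c * ((\<Sum>j\<in>{j. E i j}. x $ j) / real (degree E i))"
    by (simp add: sum_distrib_left[symmetric])
  then show "(\<Sum>j\<in>{j. E i j}. c * x $ j) / real (degree E i) = (1 - lam) * (c * x $ i)"
    using x by simp
qed

lemma deg_pos:
  assumes "no_isolated E"
  shows "real (degree E i) > 0"
proof -
  obtain j where "E i j" using assms unfolding no_isolated_def by blast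
  then show ?thesis unfolding degree_def by (auto simp: card_gt_0_iff)
qed

theorem theorem4:
  fixes E :: "'v::finite \<Rightarrow> 'v \<Rightarrow> bool"
  assumes "simple_graph E" and "connected_graph E" and "no_isolated E"
  shows "\<forall>lam. nl_mult (double_graph E) lam
                = nl_mult E lam + (if lam = 1 then CARD('v) else 0)"
proof
  fix lam :: real
  note mem = mem_double[OF assms(1)]
  note dp = deg_pos[OF assms(3)]
  show "nl_mult (double_graph E) lam = nl_mult E lam + (if lam = 1 then CARD('v) else 0)"
  proof (cases "lam = 1")
    case False
    define f :: "real^'v \<Rightarrow> real^('v+'v)" where
      "f a = (\<chi> x. case x of Inl i \<Rightarrow> a $ i | Inr i \<Rightarrow> a $ i)" for a
    have lin: "linear f"
      unfolding f_def by (rule linearI) (auto simp: vec_eq_iff split: sum.split)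
    have inj: "inj f"
    proof (rule injI)
      fix a b assume "f a = f b"
      then have "f a $ Inl i = f b $ Inl i" for i by simp
      then show "a = b" unfolding f_def by (simp add: vec_eq_iff)
    qed
    have eq: "nl_eigenspace (double_graph E) lam = f ` nl_eigenspace E lam"
    proof (rule set_eqI, rule iffI)
      fix u assume u: "u \<in> nl_eigenspace (double_graph E) lam"
      have ab: "u $ Inl i = u $ Inr i" for i
        using mem[THEN iffD1, OF u, rule_format, of i] False by auto
      define a where "a = (\<chi> i. u $ Inl i)"
      have "u = f a" unfolding f_def a_def vec_eq_iff
        by (auto simp: ab split: sum.split)
      moreover have "a \<in> nl_eigenspace E lam"
      proof -
        have "(1 / real (degree E i)) * (\<Sum>j\<in>{j. E i j}. a $ j) = (1 - lam) * a $ i" for i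
        proof -
          have h: "(1 / (2 * real (degree E i))) * ((\<Sum>j\<in>{j. E i j}. u $ Inl j) + (\<Sum>j\<in>{j. E i j}. u $ Inr j)) = (1 - lam) * u $ Inl i"
            using mem[THEN iffD1, OF u, rule_format, of i] by blast
          have "(\<Sum>j\<in>{j. E i j}. u $ Inr j) = (\<Sum>j\<in>{j. E i j}. u $ Inl j)"
            using ab by simp
          with h have "(1 / (2 * real (degree E i))) * (2 * (\<Sum>j\<in>{j. E i j}. u $ Inl j)) = (1 - lam) * u $ Inl i"
            by simp
          then show ?thesis unfolding a_def by simp
        qed
        then show ?thesis unfolding nl_eigenspace_def by blast
      qed
      ultimately show "u \<in> f ` nl_eigenspace E lam" by blast
    next
      fix u assume "u \<in> f ` nl_eigenspace E lam"
      then obtain a where a: "a \<in> nl_eigenspace E lam" and u: "u = f a" by blast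
      have "(1 / (2 * real (degree E i))) * ((\<Sum>j\<in>{j. E i j}. u $ Inl j) + (\<Sum>j\<in>{j. E i j}. u $ Inr j)) = (1 - lam) * a $ i" for i
      proof -
        have "(1 / real (degree E i)) * (\<Sum>j\<in>{j. E i j}. a $ j) = (1 - lam) * a $ i"
          using a unfolding nl_eigenspace_def by blast
        then show ?thesis unfolding u f_def by simp
      qed
      then show "u \<in> nl_eigenspace (double_graph E) lam"
        unfolding mem by (simp add: u f_def)
    qed
    have "dim (nl_eigenspace (double_graph E) lam) = dim (nl_eigenspace E lam)"
      unfolding eq by (rule dim_image_eq[OF lin]) (use inj in \<open>auto simp: inj_on_def inj_def\<close>)
    then show ?thesis using False unfolding nl_mult_def by simp
  next
    case True
    define h :: "(real^'v) \<times> (real^'v) \<Rightarrow> real^('v+'v)" where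
      "h p = (\<chi> x. case x of Inl i \<Rightarrow> fst p $ i - snd p $ i | Inr i \<Rightarrow> snd p $ i)" for p
    have lin: "linear h"
      unfolding h_def by (rule linearI) (auto simp: vec_eq_iff algebra_simps split: sum.split)
    have inj: "inj h"
    proof (rule injI)
      fix p q assume "h p = h q"
      then have "h p $ Inl i = h q $ Inl i" "h p $ Inr i = h q $ Inr i" for i by simp_all
      then have a: "snd p $ i = snd q $ i" "fst p $ i - snd p $ i = fst q $ i - snd q $ i" for i
        unfolding h_def by simp_all
      then have "fst p $ i = fst q $ i" for i by (metis diff_eq_eq)
      then show "p = q" using a(1) by (simp add: prod_eq_iff vec_eq_iff)
    qed
    have eq: "nl_eigenspace (double_graph E) lam = h ` (nl_eigenspace E 1 \<times> UNIV)"
    proof (rule set_eqI, rule iffI)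
      fix u assume u: "u \<in> nl_eigenspace (double_graph E) lam"
      define s where "s = (\<chi> i. u $ Inl i + u $ Inr i)"
      define t where "t = (\<chi> i. u $ Inr i)"
      have "u = h (s, t)" unfolding h_def s_def t_def vec_eq_iff
        by (auto split: sum.split)
      moreover have "s \<in> nl_eigenspace E 1"
      proof -
        have "(1 / real (degree E i)) * (\<Sum>j\<in>{j. E i j}. s $ j) = (1 - 1) * s $ i" for i
        proof -
          have h: "(1 / (2 * real (degree E i))) * ((\<Sum>j\<in>{j. E i j}. u $ Inl j) + (\<Sum>j\<in>{j. E i j}. u $ Inr j)) = 0"
            using mem[THEN iffD1, OF u, rule_format, of i] True by simp
          then have "(\<Sum>j\<in>{j. E i j}. s $ j) = 0"
            using dp[of i] unfolding s_def by (simp add: sum.distrib)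
          then show ?thesis by simp
        qed
        then show ?thesis unfolding nl_eigenspace_def by blast
      qed
      ultimately show "u \<in> h ` (nl_eigenspace E 1 \<times> UNIV)" by blast
    next
      fix u assume "u \<in> h ` (nl_eigenspace E 1 \<times> UNIV)"
      then obtain s t where s: "s \<in> nl_eigenspace E 1" and u: "u = h (s, t)" by blast
      have "(\<Sum>j\<in>{j. E i j}. u $ Inl j) + (\<Sum>j\<in>{j. E i j}. u $ Inr j) = 0" for i
      proof -
        have "(1 / real (degree E i)) * (\<Sum>j\<in>{j. E i j}. s $ j) = (1 - 1) * s $ i"
          using s unfolding nl_eigenspace_def by blast
        then have "(\<Sum>j\<in>{j. E i j}. s $ j) = 0" using dp[of i] by simp
        then show ?thesis unfolding u h_def by (simp add: sum.distrib[symmetric])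
      qed
      then show "u \<in> nl_eigenspace (double_graph E) lam"
        unfolding mem using True by simp
    qed
    have "dim (nl_eigenspace (double_graph E) lam) = dim (nl_eigenspace E 1 \<times> (UNIV :: (real^'v) set))"
      unfolding eq by (rule dim_image_eq[OF lin]) (use inj in \<open>auto simp: inj_on_def inj_def\<close>)
    also have "\<dots> = dim (nl_eigenspace E 1) + CARD('v)"
      by (simp add: dim_Times subspace_eig)
    finally show ?thesis using True unfolding nl_mult_def by simp
  qed
qed

end
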